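(* Let $\mathcal{A}\subset\mathbb{P}^2\mathbb{C}$ be a line arrangement with $|\mathcal{A}|=12$ all of whose intersection points have multiplicity at most $5$. Suppose the system $\mathbf{S}$ over $\mathbb{F}_2$ admits a non-constant solution. Then each line of $\mathcal{A}$ contains exactly $3$ quadruple points.
   Context: For a prime $p$, the system $\mathbf{S}$ over $\mathbb{F}_p$ is the linear system in unknowns $(\eta_H)_{H\in\mathcal{A}}$, one unknown for each line, with one set of conditions for each intersection point $X$ of $\mathcal{A}$. Let $m_X$ be the number of lines through $X$. If $p\mid m_X$, the condition is $\sum_{H\ni X}\eta_H=0$. If $p\nmid m_X$, the condition is $\eta_H=\eta_K$ for all lines $H,K$ through $X$. A solution is non-constant if not all $\eta_H$ are equal. A quadruple point is a point lying on exactly $4$ lines of $\mathcal{A}$. *)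

theory Defs
  imports "HOL-Number_Theory.Cong" Complex_Main
begin

text \<open>Points and lines of the complex projective plane are represented by
  homogeneous coordinates: nonzero vectors in C^3, up to nonzero scalars.\<close>

type_synonym cvec = "complex \<times> complex \<times> complex"

definition nonzero_vec :: "cvec \<Rightarrow> bool" where
  "nonzero_vec v \<longleftrightarrow> v \<noteq> (0, 0, 0)"

definition scale_vec :: "complex \<Rightarrow> cvec \<Rightarrow> cvec" where
  "scale_vec c v = (case v of (a, b, d) \<Rightarrow> (c * a, c * b, c * d))"

definition proj_eq :: "cvec \<Rightarrow> cvec \<Rightarrow> bool" where
  "proj_eq u v \<longleftrightarrow> (\<exists>c. c \<noteq> 0 \<and> v = scale_vec c u)"

definition on_line :: "cvec \<Rightarrow> cvec \<Rightarrow> bool" where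
  "on_line L X \<longleftrightarrow>
     (case L of (a, b, c) \<Rightarrow> case X of (x, y, z) \<Rightarrow> a * x + b * y + c * z = 0)"

definition line_arrangement :: "cvec set \<Rightarrow> bool" where
  "line_arrangement A \<longleftrightarrow> finite A \<and> (\<forall>L\<in>A. nonzero_vec L) \<and>
     (\<forall>L\<in>A. \<forall>K\<in>A. proj_eq L K \<longrightarrow> L = K)"

definition lines_through :: "cvec set \<Rightarrow> cvec \<Rightarrow> cvec set" where
  "lines_through A X = {H \<in> A. on_line H X}"

definition mult :: "cvec set \<Rightarrow> cvec \<Rightarrow> nat" where
  "mult A X = card (lines_through A X)"

definition intersection_point :: "cvec set \<Rightarrow> cvec \<Rightarrow> bool" where
  "intersection_point A X \<longleftrightarrow> nonzero_vec X \<and> mult A X \<ge> 2"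

definition quadruple_point :: "cvec set \<Rightarrow> cvec \<Rightarrow> bool" where
  "quadruple_point A X \<longleftrightarrow> nonzero_vec X \<and> mult A X = 4"

text \<open>Solutions of the system S over F_p: values in F_p are represented by
  integers, equality in F_p being congruence modulo p.\<close>
definition system_S_solution :: "nat \<Rightarrow> cvec set \<Rightarrow> (cvec \<Rightarrow> int) \<Rightarrow> bool" where
  "system_S_solution p A \<eta> \<longleftrightarrow>
     (\<forall>X. intersection_point A X \<longrightarrow>
        (if p dvd mult A X
         then [(\<Sum>H\<in>lines_through A X. \<eta> H) = 0] (mod int p)
         else (\<forall>H\<in>lines_through A X. \<forall>K\<in>lines_through A X. [\<eta> H = \<eta> K] (mod int p))))"

definition nonconstant_sol :: "nat \<Rightarrow> cvec set \<Rightarrow> (cvec \<Rightarrow> int) \<Rightarrow> bool" where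
  "nonconstant_sol p A \<eta> \<longleftrightarrow> (\<exists>H\<in>A. \<exists>K\<in>A. \<not> [\<eta> H = \<eta> K] (mod int p))"

text \<open>The set of projective points (equivalence classes of representatives)
  that are quadruple points on the line H.\<close>
definition proj_class :: "cvec \<Rightarrow> cvec set" where
  "proj_class X = {Y. proj_eq X Y}"

definition quadruple_points_on :: "cvec set \<Rightarrow> cvec \<Rightarrow> cvec set set" where
  "quadruple_points_on A H = proj_class ` {X. quadruple_point A X \<and> on_line H X}"

end

theory Submission
  imports Defs
begin

definition cross :: "cvec \<Rightarrow> cvec \<Rightarrow> cvec" where
 "cross u v = (case u of (a,b,c) \<Rightarrow> case v of (d,e,f) \<Rightarrow> (b*f - c*e, c*d - a*f, a*e - b*d))"

lemma on_line_cross1: "on_line u (cross u v)"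
  by (cases u; cases v) (auto simp: on_line_def cross_def algebra_simps)

lemma on_line_cross2: "on_line v (cross u v)"
  by (cases u; cases v) (auto simp: on_line_def cross_def algebra_simps)

lemma cross_zero:
  assumes "nonzero_vec u" "cross u v = (0,0,0)"
  shows "\<exists>c. v = scale_vec c u"
proof -
  obtain a b c where u: "u = (a,b,c)" by (cases u) auto
  obtain d e f where v: "v = (d,e,f)" by (cases v) auto
  have eqs: "b*f = c*e" "c*d = a*f" "a*e = b*d" using assms(2) by (auto simp: u v cross_def)
  have nz: "a \<noteq> 0 \<or> b \<noteq> 0 \<or> c \<noteq> 0" using assms(1) by (auto simp: u nonzero_vec_def)
  show ?thesis
  proof (cases "a \<noteq> 0")
    case True
    have "d = d/a*a" "e = d/a*b" "f = d/a*c" using True eqs by (auto simp: field_simps)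
    then have "v = scale_vec (d/a) u" by (simp add: u v scale_vec_def)
    then show ?thesis by blast
  next
    case F1: False
    show ?thesis
    proof (cases "b \<noteq> 0")
      case True
      have "d = e/b*a" "e = e/b*b" "f = e/b*c" using True eqs F1 by (auto simp: field_simps)
      then have "v = scale_vec (e/b) u" by (simp add: u v scale_vec_def)
      then show ?thesis by blast
    next
      case False
      with nz F1 have "c \<noteq> 0" by auto
      have "d = f/c*a" "e = f/c*b" "f = f/c*c" using \<open>c \<noteq> 0\<close> False eqs F1 by (auto simp: field_simps)
      then have "v = scale_vec (f/c) u" by (simp add: u v scale_vec_def)
      then show ?thesis by blast
    qed
  qed
qed

lemma scale_zero_iff: "scale_vec c u = (0,0,0) \<longleftrightarrow> c = 0 \<or> u = (0,0,0)"
  by (cases u) (auto simp: scale_vec_def)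

lemma proj_eqI: "nonzero_vec v \<Longrightarrow> v = scale_vec c u \<Longrightarrow> proj_eq u v"
  unfolding proj_eq_def nonzero_vec_def
  by (cases u) (auto simp: scale_vec_def)

lemma proj_eq_refl: "proj_eq X X"
  unfolding proj_eq_def by (rule exI[of _ 1]) (cases X, auto simp: scale_vec_def)

lemma proj_eq_sym: assumes "proj_eq X Y" shows "proj_eq Y X"
proof -
  obtain c where c: "c \<noteq> 0" "Y = scale_vec c X" using assms proj_eq_def by blast
  have "X = scale_vec (inverse c) Y" using c by (cases X) (auto simp: scale_vec_def)
  then show ?thesis using c(1) unfolding proj_eq_def by (intro exI[of _ "inverse c"]) auto
qed

lemma proj_eq_trans: assumes "proj_eq X Y" "proj_eq Y Z" shows "proj_eq X Z"
proof -
  obtain c where c: "c \<noteq> 0" "Y = scale_vec c X" using assms proj_eq_def by blast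
  obtain d where d: "d \<noteq> 0" "Z = scale_vec d Y" using assms proj_eq_def by blast
  have "Z = scale_vec (d*c) X" using c d by (cases X) (auto simp: scale_vec_def)
  then show ?thesis using c(1) d(1) unfolding proj_eq_def by (intro exI[of _ "d*c"]) auto
qed

lemma proj_class_eq: "proj_class X = proj_class Y \<longleftrightarrow> proj_eq X Y"
proof
  assume "proj_class X = proj_class Y"
  moreover have "Y \<in> proj_class Y" unfolding proj_class_def using proj_eq_refl by simp
  ultimately show "proj_eq X Y" unfolding proj_class_def by (metis mem_Collect_eq)
next
  assume a: "proj_eq X Y"
  show "proj_class X = proj_class Y" unfolding proj_class_def
    using proj_eq_trans[OF a] proj_eq_trans[OF proj_eq_sym[OF a]] by blast
qed

lemma on_line_proj: assumes "proj_eq X Y" shows "on_line L X \<longleftrightarrow> on_line L Y"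
proof -
  obtain c where c: "c \<noteq> 0" "Y = scale_vec c X" using assms proj_eq_def by blast
  obtain a b d where L: "L = (a,b,d)" by (cases L) auto
  obtain x y z where X: "X = (x,y,z)" by (cases X) auto
  have "a * (c*x) + b * (c*y) + d * (c*z) = c * (a*x+b*y+d*z)" by (simp add: algebra_simps)
  then show ?thesis using c by (simp add: L X on_line_def scale_vec_def)
qed

lemma nonzero_proj: assumes "proj_eq X Y" shows "nonzero_vec X \<longleftrightarrow> nonzero_vec Y"
proof -
  obtain c where c: "c \<noteq> 0" "Y = scale_vec c X" using assms proj_eq_def by blast
  then show ?thesis by (cases X) (auto simp: nonzero_vec_def scale_vec_def)
qed

lemma lines_through_proj: "proj_eq X Y \<Longrightarrow> lines_through A X = lines_through A Y"
  unfolding lines_through_def using on_line_proj by blast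

lemma cross_nonzero:
  assumes "nonzero_vec L" "nonzero_vec K" "\<not> proj_eq L K"
  shows "nonzero_vec (cross L K)"
  using cross_zero[OF assms(1)] proj_eqI[OF assms(2)] assms(3)
  unfolding nonzero_vec_def by blast

lemma unique_meet:
  assumes "nonzero_vec L" "nonzero_vec K" "\<not> proj_eq L K" "nonzero_vec X"
    "on_line L X" "on_line K X"
  shows "proj_eq (cross L K) X"
proof -
  obtain a b c where L: "L = (a,b,c)" by (cases L) auto
  obtain d e f where K: "K = (d,e,f)" by (cases K) auto
  obtain x y z where X: "X = (x,y,z)" by (cases X) auto
  have h: "a*x+b*y+c*z = 0" "d*x+e*y+f*z = 0" using assms(5,6) by (auto simp: L K X on_line_def)
  have "cross (cross L K) X = (0,0,0)" using h
    unfolding L K X cross_def by (simp, algebra)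
  then show ?thesis using cross_zero[OF cross_nonzero[OF assms(1-3)]] proj_eqI[OF assms(4)] by blast
qed

definition partner :: "cvec set \<Rightarrow> (cvec \<Rightarrow> bool) \<Rightarrow> cvec \<Rightarrow> cvec \<Rightarrow> cvec" where
  "partner A c H K = the_elem ({K'\<in>lines_through A (cross H K). \<not> c K'} - {H})"

lemma fin_T: "finite A \<Longrightarrow> finite (lines_through A X)"
  unfolding lines_through_def by auto

context
  fixes A :: "cvec set" and c :: "cvec \<Rightarrow> bool"
  assumes la: "line_arrangement A"
    and col: "\<And>X H K. nonzero_vec X \<Longrightarrow> card (lines_through A X) \<noteq> 4 \<Longrightarrow>
       H \<in> lines_through A X \<Longrightarrow> K \<in> lines_through A X \<Longrightarrow> c H = c K"
    and col4: "\<And>X. nonzero_vec X \<Longrightarrow> card (lines_through A X) = 4 \<Longrightarrow>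
       even (card {K \<in> lines_through A X. c K})"
begin

lemma finA: "finite A" using la line_arrangement_def by blast
lemma finT: "finite (lines_through A X)" using fin_T finA by blast
lemma nzA: "H \<in> A \<Longrightarrow> nonzero_vec H" using la line_arrangement_def by blast
lemma npA: "H \<in> A \<Longrightarrow> K \<in> A \<Longrightarrow> H \<noteq> K \<Longrightarrow> \<not> proj_eq H K"
  using la line_arrangement_def by blast

lemma cross_nzA: "H \<in> A \<Longrightarrow> K \<in> A \<Longrightarrow> H \<noteq> K \<Longrightarrow> nonzero_vec (cross H K)"
  using cross_nonzero nzA npA by blast

lemma mixed_pt:
  assumes X: "nonzero_vec X" and H: "H \<in> lines_through A X" and K: "K \<in> lines_through A X"
    and d: "c H \<noteq> c K"
  shows "card (lines_through A X) = 4 \<and> card {K \<in> lines_through A X. c K} = 2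
       \<and> card {K \<in> lines_through A X. \<not> c K} = 2"
proof -
  let ?T = "lines_through A X" let ?S = "{K \<in> lines_through A X. c K}"
  have T4: "card ?T = 4" using col[OF X _ H K] d by blast
  have ev: "even (card ?S)" using col4[OF X T4] .
  have ne: "?S \<noteq> {}" using H K d by blast
  have fS: "finite ?S" using finT by auto
  have "card ?S \<noteq> 0" using ne fS by simp
  have "?S \<subset> ?T" using H K d by blast
  then have "card ?S < 4" using psubset_card_mono[OF finT] T4 by metis
  have S2: "card ?S = 2" using ev \<open>card ?S \<noteq> 0\<close> \<open>card ?S < 4\<close> by presburger
  have "{K \<in> ?T. \<not> c K} = ?T - ?S" by auto
  then have "card {K \<in> ?T. \<not> c K} = card ?T - card ?S"
    using card_Diff_subset[OF fS] by auto
  then show ?thesis using T4 S2 by simp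
qed

lemma partner_props:
  assumes H: "H \<in> A" "\<not> c H" and K: "K \<in> A" "c K"
  shows "partner A c H K \<in> lines_through A (cross H K) \<and> \<not> c (partner A c H K) \<and> partner A c H K \<noteq> H
    \<and> (\<forall>H'\<in>lines_through A (cross H K). \<not> c H' \<longrightarrow> H' = H \<or> H' = partner A c H K)"
proof -
  have HK: "H \<noteq> K" using H K by auto
  let ?Q = "cross H K"
  have Qnz: "nonzero_vec ?Q" using cross_nonzero nzA npA H K HK by blast
  have HT: "H \<in> lines_through A ?Q" "K \<in> lines_through A ?Q"
    using H K on_line_cross1 on_line_cross2 unfolding lines_through_def by auto
  let ?S = "{K'\<in>lines_through A ?Q. \<not> c K'}"
  have S2: "card ?S = 2" using mixed_pt[OF Qnz HT] H K by auto
  have "H \<in> ?S" using HT H by auto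
  then have "card (?S - {H}) = 1" using S2 by simp
  then obtain P where P: "?S - {H} = {P}" using card_1_singletonE by blast
  have "partner A c H K = P" unfolding partner_def P by simp
  then show ?thesis using P by blast
qed

lemma fiber:
  assumes H: "H \<in> A" "\<not> c H" and H': "H' \<in> A" "\<not> c H'" "H' \<noteq> H" and K: "K \<in> A" "c K"
  shows "partner A c H K = H' \<longleftrightarrow> on_line K (cross H H')"
proof -
  have HK: "H \<noteq> K" using H K by auto
  have Qnz: "nonzero_vec (cross H K)" using cross_nonzero nzA npA H K HK by blast
  have Q'nz: "nonzero_vec (cross H H')" using cross_nzA[OF H(1) H'(1)] H'(3) by auto
  note pp = partner_props[OF H K]
  show ?thesis
  proof
    assume "partner A c H K = H'"
    then have "on_line H' (cross H K)" using pp unfolding lines_through_def by auto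
    then have "proj_eq (cross H H') (cross H K)"
      using unique_meet[OF nzA[OF H(1)] nzA[OF H'(1)] npA[OF H(1) H'(1)] Qnz] H' on_line_cross1 by metis
    then show "on_line K (cross H H')" using on_line_proj on_line_cross2 by metis
  next
    assume a: "on_line K (cross H H')"
    have "proj_eq (cross H K) (cross H H')"
      using unique_meet[OF nzA[OF H(1)] nzA[OF K(1)] npA[OF H(1) K(1) HK] Q'nz] a on_line_cross1 by metis
    then have "on_line H' (cross H K)" using on_line_proj on_line_cross2 by metis
    then have "H' \<in> lines_through A (cross H K)" using H' unfolding lines_through_def by auto
    then show "partner A c H K = H'" using pp H' by blast
  qed
qed

lemma count:
  assumes H: "H \<in> A" "\<not> c H"
  shows "card {K\<in>A. c K} = 2 * card (partner A c H ` {K\<in>A. c K})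
     \<and> partner A c H ` {K\<in>A. c K} \<subseteq> {K\<in>A. \<not> c K} - {H}"
proof -
  let ?A1 = "{K\<in>A. c K}" let ?g = "partner A c H"
  have sub: "?g ` ?A1 \<subseteq> {K\<in>A. \<not> c K} - {H}"
  proof
    fix y assume "y \<in> ?g ` ?A1"
    then obtain K where K: "K \<in> A" "c K" "y = ?g K" by blast
    note pp = partner_props[OF H K(1,2)]
    have "?g K \<in> A" using conjunct1[OF pp] unfolding lines_through_def by simp
    moreover have "\<not> c (?g K)" "?g K \<noteq> H" using pp by simp_all
    ultimately show "y \<in> {K\<in>A. \<not> c K} - {H}" using K(3) by simp
  qed
  have fA1: "finite ?A1" using finA by auto
  have "card ?A1 = (\<Sum>y\<in>?g ` ?A1. card {x \<in> ?A1. ?g x = y})"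
    unfolding card_eq_sum by (rule sum.image_gen[OF fA1])
  also have "\<dots> = (\<Sum>y\<in>?g ` ?A1. 2)"
  proof (rule sum.cong[OF refl])
    fix y assume y: "y \<in> ?g ` ?A1"
    then obtain K0 where K0: "K0 \<in> ?A1" "?g K0 = y" by blast
    have yA: "y \<in> A" "\<not> c y" "y \<noteq> H" using sub y by auto
    have eq: "{x \<in> ?A1. ?g x = y} = {K \<in> lines_through A (cross H y). c K}"
      using fiber[OF H yA] unfolding lines_through_def by blast
    have Qnz: "nonzero_vec (cross H y)" using cross_nzA[OF H(1) yA(1)] yA(3) by auto
    have "H \<in> lines_through A (cross H y)" using H on_line_cross1 unfolding lines_through_def by auto
    moreover have "K0 \<in> lines_through A (cross H y)" using eq K0 by auto
    moreover have "c H \<noteq> c K0" using H K0 by simp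
    ultimately have "card {K \<in> lines_through A (cross H y). c K} = 2"
      using mixed_pt[OF Qnz] by blast
    then show "card {x \<in> ?A1. ?g x = y} = 2" using eq by simp
  qed
  also have "\<dots> = 2 * card (?g ` ?A1)" by simp
  finally show ?thesis using sub by simp
qed

lemma quad:
  assumes H: "H \<in> A" "\<not> c H" and a6: "card {K\<in>A. \<not> c K} = 6"
    and k3: "card (partner A c H ` {K\<in>A. c K}) = 3"
  shows "card (quadruple_points_on A H) = 3"
proof -
  let ?A1 = "{K\<in>A. c K}" let ?A0 = "{K\<in>A. \<not> c K}" let ?g = "partner A c H"
  let ?I = "?g ` ?A1"
  have sub: "?I \<subseteq> ?A0 - {H}" using count[OF H] by blast
  have mixedI: "card (lines_through A (cross H y)) = 4 \<and> card {K \<in> lines_through A (cross H y). \<not> c K} = 2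
      \<and> H \<in> lines_through A (cross H y) \<and> y \<in> lines_through A (cross H y) \<and> nonzero_vec (cross H y)"
    if y: "y \<in> ?I" for y
  proof -
    obtain K0 where K0: "K0 \<in> ?A1" "?g K0 = y" using y by blast
    have yA: "y \<in> A" "\<not> c y" "y \<noteq> H" using sub y by auto
    have Qnz: "nonzero_vec (cross H y)" using cross_nzA[OF H(1) yA(1)] yA(3) by auto
    have HT: "H \<in> lines_through A (cross H y)" "y \<in> lines_through A (cross H y)"
      using H yA on_line_cross1 on_line_cross2 unfolding lines_through_def by auto
    have "K0 \<in> lines_through A (cross H y)" using fiber[OF H yA] K0 unfolding lines_through_def by auto
    then show ?thesis using mixed_pt[OF Qnz HT(1)] H K0 HT Qnz by auto
  qed
  have inj: "inj_on (\<lambda>y. proj_class (cross H y)) ?I"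
  proof
    fix y1 y2 assume y1: "y1 \<in> ?I" and y2: "y2 \<in> ?I"
      and e: "proj_class (cross H y1) = proj_class (cross H y2)"
    then have pe: "proj_eq (cross H y1) (cross H y2)" using proj_class_eq by blast
    note m1 = mixedI[OF y1]
    have "y2 \<in> lines_through A (cross H y1)"
      using mixedI[OF y2] lines_through_proj[OF pe] by simp
    then have "{H, y1, y2} \<subseteq> {K \<in> lines_through A (cross H y1). \<not> c K}"
      using m1 sub y1 y2 H by auto
    then have "card {H, y1, y2} \<le> 2" using m1 card_mono[OF _ \<open>{H, y1, y2} \<subseteq> _\<close>] finT by simp
    then show "y1 = y2" using sub y1 y2 by (auto simp: card_insert_if split: if_splits)
  qed
  have eqset: "quadruple_points_on A H = (\<lambda>y. proj_class (cross H y)) ` ?I"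
  proof
    show "(\<lambda>y. proj_class (cross H y)) ` ?I \<subseteq> quadruple_points_on A H"
    proof
      fix P assume "P \<in> (\<lambda>y. proj_class (cross H y)) ` ?I"
      then obtain y where y: "y \<in> ?I" "P = proj_class (cross H y)" by blast
      have "quadruple_point A (cross H y) \<and> on_line H (cross H y)"
        using mixedI[OF y(1)] unfolding quadruple_point_def mult_def lines_through_def by auto
      then show "P \<in> quadruple_points_on A H" unfolding quadruple_points_on_def using y by blast
    qed
  next
    show "quadruple_points_on A H \<subseteq> (\<lambda>y. proj_class (cross H y)) ` ?I"
    proof
      fix P assume "P \<in> quadruple_points_on A H"
      then obtain X where X: "quadruple_point A X" "on_line H X" "P = proj_class X"
        unfolding quadruple_points_on_def by blast
      let ?T = "lines_through A X"
      have Xnz: "nonzero_vec X" and T4: "card ?T = 4" using X unfolding quadruple_point_def mult_def by auto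
      have HT: "H \<in> ?T" using H X unfolding lines_through_def by auto
      show "P \<in> (\<lambda>y. proj_class (cross H y)) ` ?I"
      proof (cases "\<exists>K\<in>?T. c K")
        case True
        then obtain K where K: "K \<in> ?T" "c K" by blast
        have KA: "K \<in> A" "on_line K X" using K unfolding lines_through_def by auto
        have HK: "H \<noteq> K" using H K by auto
        have pe1: "proj_eq (cross H K) X"
          using unique_meet[OF nzA[OF H(1)] nzA[OF KA(1)] npA[OF H(1) KA(1) HK] Xnz X(2) KA(2)] .
        let ?y = "?g K"
        have yI: "?y \<in> ?I" using KA K by auto
        have yA: "?y \<in> A" "?y \<noteq> H" using sub yI by auto
        have "on_line ?y (cross H K)" using partner_props[OF H KA(1) K(2)] unfolding lines_through_def by auto
        then have "on_line ?y X" using on_line_proj[OF pe1] by blast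
        then have "proj_eq (cross H ?y) X"
          using unique_meet[OF nzA[OF H(1)] nzA[OF yA(1)] npA[OF H(1) yA(1)] Xnz X(2)] yA by metis
        then have "P = proj_class (cross H ?y)" using X(3) proj_class_eq proj_eq_sym by metis
        then show ?thesis using yI by blast
      next
        case False
        have disj: "(?T - {H}) \<inter> ?I = {}"
        proof (rule ccontr)
          assume "(?T - {H}) \<inter> ?I \<noteq> {}"
          then obtain y where y: "y \<in> ?T" "y \<noteq> H" "y \<in> ?I" by blast
          have yA: "y \<in> A" "on_line y X" using y unfolding lines_through_def by auto
          have "proj_eq (cross H y) X"
            using unique_meet[OF nzA[OF H(1)] nzA[OF yA(1)] npA[OF H(1) yA(1)] Xnz X(2) yA(2)] y by metis
          then have "lines_through A (cross H y) = ?T" using lines_through_proj by blast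
          then have "card {K \<in> ?T. \<not> c K} = 2" using mixedI[OF y(3)] by simp
          moreover have "{K \<in> ?T. \<not> c K} = ?T" using False by auto
          ultimately show False using T4 by simp
        qed
        have "?T - {H} \<subseteq> (?A0 - {H}) - ?I" using False disj unfolding lines_through_def by auto
        moreover have "card (?T - {H}) = 3" using T4 HT finT by simp
        moreover have "card ((?A0 - {H}) - ?I) = 2"
        proof -
          have "card (?A0 - {H}) = 5" using a6 H by simp
          moreover have "finite ?I" using finA by simp
          ultimately show ?thesis using card_Diff_subset[of ?I "?A0 - {H}"] sub k3 by simp
        qed
        ultimately have False using card_mono[of "(?A0 - {H}) - ?I" "?T - {H}"] finA by auto
        then show ?thesis ..
      qed
    qed
  qed
  show ?thesis unfolding eqset using card_image[OF inj] k3 by simp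
qed

end
lemma even_sum_card:
  fixes f :: "'a \<Rightarrow> int"
  assumes "finite T"
  shows "even (sum f T) \<longleftrightarrow> even (card {x\<in>T. odd (f x)})"
  using assms
proof (induction T rule: finite_induct)
  case empty then show ?case by simp
next
  case (insert x F)
  have fin: "finite {y\<in>F. odd (f y)}" using insert by simp
  show ?case
  proof (cases "odd (f x)")
    case True
    then have "{y\<in>insert x F. odd (f y)} = insert x {y\<in>F. odd (f y)}" by auto
    then show ?thesis using insert True fin by simp
  next
    case False
    then have "{y\<in>insert x F. odd (f y)} = {y\<in>F. odd (f y)}" by auto
    then show ?thesis using insert False by simp
  qed
qed

lemma cong2_iff: "[(a::int) = b] (mod int 2) \<longleftrightarrow> (odd a \<longleftrightarrow> odd b)"
  unfolding cong_def by (simp add: odd_iff_mod_2_eq_one) (metis mod2_eq_if)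

theorem lemma3p5:
  fixes A :: "cvec set" and \<eta> :: "cvec \<Rightarrow> int"
  assumes "line_arrangement A"
    and "card A = 12"
    and "\<forall>X. intersection_point A X \<longrightarrow> mult A X \<le> 5"
    and "system_S_solution 2 A \<eta>"
    and "nonconstant_sol 2 A \<eta>"
  shows "\<forall>H\<in>A. card (quadruple_points_on A H) = 3"
proof -
  define c where "c = (\<lambda>K. odd (\<eta> K))"
  have la: "line_arrangement A" by fact
  have finA: "finite A" using la line_arrangement_def by blast
  have finT: "finite (lines_through A X)" for X using fin_T finA by blast
  have sysX: "(if 2 dvd card (lines_through A X)
         then [(\<Sum>H\<in>lines_through A X. \<eta> H) = 0] (mod int 2)
         else (\<forall>H\<in>lines_through A X. \<forall>K\<in>lines_through A X. [\<eta> H = \<eta> K] (mod int 2)))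
       \<and> card (lines_through A X) \<le> 5"
    if "nonzero_vec X" "card (lines_through A X) \<ge> 2" for X
  proof -
    have ip: "intersection_point A X" using that unfolding intersection_point_def mult_def by simp
    have a: "if 2 dvd mult A X
         then [(\<Sum>H\<in>lines_through A X. \<eta> H) = 0] (mod int 2)
         else (\<forall>H\<in>lines_through A X. \<forall>K\<in>lines_through A X. [\<eta> H = \<eta> K] (mod int 2))"
      using assms(4) ip unfolding system_S_solution_def by blast
    have b: "mult A X \<le> 5" using assms(3) ip by blast
    show ?thesis using a b unfolding mult_def by blast
  qed
  have evc: "even (card {K \<in> lines_through A X. c K})"
    if "nonzero_vec X" "card (lines_through A X) \<ge> 2" "2 dvd card (lines_through A X)" for X
  proof -
    have "[(\<Sum>H\<in>lines_through A X. \<eta> H) = 0] (mod int 2)" using sysX[OF that(1,2)] that(3) by simp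
    then have "even (\<Sum>H\<in>lines_through A X. \<eta> H)" using cong2_iff by auto
    then show ?thesis using even_sum_card[OF finT] unfolding c_def by blast
  qed
  have col4: "even (card {K \<in> lines_through A X. c K})"
    if "nonzero_vec X" "card (lines_through A X) = 4" for X
    using evc that by simp
  have col: "c H = c K" if X: "nonzero_vec X" "card (lines_through A X) \<noteq> 4"
     and HK: "H \<in> lines_through A X" "K \<in> lines_through A X" for X H K
  proof (cases "H = K")
    case True then show ?thesis by simp
  next
    case False
    let ?T = "lines_through A X"
    have "card {H, K} \<le> card ?T" using HK finT by (intro card_mono) auto
    then have m2: "card ?T \<ge> 2" using False by simp
    note s = sysX[OF X(1) m2]
    show ?thesis
    proof (cases "2 dvd card ?T")
      case True
      have "card ?T \<le> 5" using s by blast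
      then have "card ?T = 2" using True X(2) m2 by presburger
      let ?S = "{K \<in> ?T. c K}"
      have ev: "even (card ?S)" using evc[OF X(1) m2 True] .
      have sub: "?S \<subseteq> ?T" by auto
      then have "card ?S \<le> 2" using card_mono[OF finT sub] \<open>card ?T = 2\<close> by simp
      then have "card ?S = 0 \<or> card ?S = 2" using ev by presburger
      then show ?thesis
      proof
        assume "card ?S = 0"
        then have "?S = {}" using finT by simp
        then show ?thesis using HK by blast
      next
        assume "card ?S = 2"
        then have "?S = ?T" using card_subset_eq[OF finT sub] \<open>card ?T = 2\<close> by simp
        then show ?thesis using HK by blast
      qed
    next
      case False
      then have "[\<eta> H = \<eta> K] (mod int 2)" using s HK by auto
      then show ?thesis unfolding c_def using cong2_iff by blast
    qed
  qed
  have col': "(\<not> c H) = (\<not> c K)" if "nonzero_vec X" "card (lines_through A X) \<noteq> 4"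
     "H \<in> lines_through A X" "K \<in> lines_through A X" for X H K
    using col[OF that] by simp
  have col4': "even (card {K \<in> lines_through A X. \<not> c K})"
    if X: "nonzero_vec X" "card (lines_through A X) = 4" for X
  proof -
    have "{K \<in> lines_through A X. \<not> c K} = lines_through A X - {K \<in> lines_through A X. c K}" by auto
    then have "card {K \<in> lines_through A X. \<not> c K} = 4 - card {K \<in> lines_through A X. c K}"
      using card_Diff_subset[of "{K \<in> lines_through A X. c K}" "lines_through A X"] finT X(2) by simp
    moreover have "card {K \<in> lines_through A X. c K} \<le> 4" 
      using card_mono[OF finT, of "{K \<in> lines_through A X. c K}" X] X(2) by (simp add: subset_iff)
    ultimately show ?thesis using col4[OF X] by presburger
  qed
  have cnt: "card {K\<in>A. c K} = 2 * card (partner A c H ` {K\<in>A. c K})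
     \<and> partner A c H ` {K\<in>A. c K} \<subseteq> {K\<in>A. \<not> c K} - {H}" if "H \<in> A" "\<not> c H" for H
    by (rule count[where A=A and c=c]; (rule la | (rule col, assumption+) | (rule col4, assumption+) | rule that))
  have cnt': "card {K\<in>A. \<not> c K} = 2 * card (partner A (\<lambda>K. \<not> c K) H ` {K\<in>A. \<not> c K})
     \<and> partner A (\<lambda>K. \<not> c K) H ` {K\<in>A. \<not> c K} \<subseteq> {K\<in>A. \<not> \<not> c K} - {H}" if "H \<in> A" "\<not> \<not> c H" for H
    by (rule count[where A=A and c="\<lambda>K. \<not> c K"]; (rule la | (rule col', assumption+) | (rule col4', assumption+) | rule that))
  have qd: "card (quadruple_points_on A H) = 3" if "H \<in> A" "\<not> c H" "card {K\<in>A. \<not> c K} = 6"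
    "card (partner A c H ` {K\<in>A. c K}) = 3" for H
    by (rule quad[where A=A and c=c]; (rule la | (rule col, assumption+) | (rule col4, assumption+) | rule that))
  have qd': "card (quadruple_points_on A H) = 3" if "H \<in> A" "\<not> \<not> c H" "card {K\<in>A. \<not> \<not> c K} = 6"
    "card (partner A (\<lambda>K. \<not> c K) H ` {K\<in>A. \<not> c K}) = 3" for H
    by (rule quad[where A=A and c="\<lambda>K. \<not> c K"]; (rule la | (rule col', assumption+) | (rule col4', assumption+) | rule that))
  obtain H1 K1 where HK1: "H1 \<in> A" "K1 \<in> A" "\<not> [\<eta> H1 = \<eta> K1] (mod int 2)"
    using assms(5) unfolding nonconstant_sol_def by blast
  have "c H1 \<noteq> c K1" using HK1(3) cong2_iff unfolding c_def by blast
  then obtain H0 K0 where HK0: "H0 \<in> A" "K0 \<in> A" "\<not> c H0" "c K0"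
    using HK1(1,2) by (cases "c H1") auto
  let ?A0 = "{K\<in>A. \<not> c K}" let ?A1 = "{K\<in>A. c K}"
  have sum12: "card ?A0 + card ?A1 = 12"
  proof -
    have "A = ?A0 \<union> ?A1" "?A0 \<inter> ?A1 = {}" by auto
    then show ?thesis using card_Un_disjoint[of ?A0 ?A1] finA assms(2) by simp
  qed
  have fin0: "finite ?A0" using finA by simp
  have fin1: "finite ?A1" using finA by simp
  have cA: "card ?A1 = 2 * card (partner A c H0 ` ?A1)"
     and sA: "partner A c H0 ` ?A1 \<subseteq> ?A0 - {H0}" using cnt[OF HK0(1,3)] by blast+
  have "card (partner A c H0 ` ?A1) \<le> card (?A0 - {H0})" using card_mono[OF _ sA] fin0 by blast
  moreover have "card (?A0 - {H0}) = card ?A0 - 1" using HK0 fin0 by simp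
  ultimately have c1: "card ?A1 = 2 * card (partner A c H0 ` ?A1)" "card (partner A c H0 ` ?A1) \<le> card ?A0 - 1"
    using cA by simp_all
  have cB: "card ?A0 = 2 * card (partner A (\<lambda>K. \<not> c K) K0 ` ?A0)"
     and sB: "partner A (\<lambda>K. \<not> c K) K0 ` ?A0 \<subseteq> ?A1 - {K0}" using cnt'[OF HK0(2)] HK0(4) by auto
  have "card (partner A (\<lambda>K. \<not> c K) K0 ` ?A0) \<le> card (?A1 - {K0})" using card_mono[OF _ sB] fin1 by blast
  moreover have "card (?A1 - {K0}) = card ?A1 - 1" using HK0 fin1 by simp
  ultimately have c2: "card ?A0 = 2 * card (partner A (\<lambda>K. \<not> c K) K0 ` ?A0)"
      "card (partner A (\<lambda>K. \<not> c K) K0 ` ?A0) \<le> card ?A1 - 1"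
    using cB by simp_all
  have a6: "card ?A0 = 6" using c1 c2 sum12 by presburger
  have b6: "card ?A1 = 6" using a6 sum12 by simp
  show ?thesis
  proof
    fix H assume H: "H \<in> A"
    show "card (quadruple_points_on A H) = 3"
    proof (cases "c H")
      case False
      have "card (partner A c H ` ?A1) = 3" using cnt[OF H False] b6 by simp
      then show ?thesis using qd[OF H False a6] by simp
    next
      case True
      have "card (partner A (\<lambda>K. \<not> c K) H ` ?A0) = 3" using cnt'[OF H] True a6 by simp
      then show ?thesis using qd'[OF H] True b6 by simp
    qed
  qed
qed

end
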